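(* Fix any $\pi_0\in\mathbb R^N$ and $Z_0\in\mathbb R^{n_u\times n_x}$, and let $\Pi_0=\Pi(\pi_0)$. Let $\hat L$ be the optimal value (infimum, $+\infty$ if infeasible) of the convex approximation: minimize $(\eta+1)\zeta+\alpha_\pi^\top\pi$ over $S\in\mathbb S^{n_x}$, $Z\in\mathbb R^{n_u\times n_x}$, $\zeta\in\mathbb R$, $\pi\in\mathbb R^N$ subject to $\mathcal C_s(S,\Pi(\pi),Z;\Pi_0,Z_0)\preceq0$, $\mathcal F_2(S,\zeta)\preceq0$, $H\pi\le h$, $0\le\pi\le\mathbf1$. Then $L\le\hat L$, where $L$ is the optimal value of problem (R).
   Context: Let $N\ge1$, $n_{u_1},\dots,n_{u_N}\ge1$, $n_u=\sum_i n_{u_i}$, $n_x,n_w,n_z\ge1$. Fix real matrices $A\in\mathbb R^{n_x\times n_x}$, $B_u\in\mathbb R^{n_x\times n_u}$, $B_w\in\mathbb R^{n_x\times n_w}$, $C_z\in\mathbb R^{n_z\times n_x}$, $D_{wz}\in\mathbb R^{n_z\times n_w}$, constants $\alpha>0$, $\eta>0$, $\alpha_\pi\in\mathbb R^N$, $H\in\mathbb R^{r\times N}$, $h\in\mathbb R^r$. For $\pi\in\mathbb R^N$ let $\Pi(\pi)=\mathrm{blkdiag}(\pi_1 I_{n_{u_1}},\dots,\pi_N I_{n_{u_N}})$. Define $\mathcal F_1(S,Z,\pi)=\begin{bmatrix} AS+SA^\top+\alpha S-B_u\Pi Z-Z^\top\Pi B_u^\top & B_w\\ B_w^\top & -\alpha\eta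 I_{n_w}\end{bmatrix}$ ($\Pi=\Pi(\pi)$), $\mathcal F_2(S,\zeta)=\begin{bmatrix}-S&0&SC_z^\top\\0&-I_{n_w}&D_{wz}^\top\\ C_zS&D_{wz}&-\zeta I_{n_z}\end{bmatrix}$. Problem (R): minimize $(\eta+1)\zeta+\alpha_\pi^\top\pi$ subject to $\mathcal F_1\preceq0$, $\mathcal F_2\preceq0$, $H\pi\le h$, $0\le\pi\le\mathbf1$; optimal value $L$. With $X=B_u\Pi+Z^\top$, $X_0=B_u\Pi_0+Z_0^\top$, let $\mathcal H_{\mathrm{lin}}(\Pi,Z;\Pi_0,Z_0)=X_0X_0^\top-XX_0^\top-X_0X^\top$ and $\mathcal C_s(S,\Pi,Z;\Pi_0,Z_0)=\begin{bmatrix}AS+SA^\top+\alpha S+\tfrac12\mathcal H_{\mathrm{lin}}(\Pi,Z;\Pi_0,Z_0) & \tfrac1{\sqrt2}(B_u\Pi-Z^\top) & B_w\\ \tfrac1{\sqrt2}(B_u\Pi-Z^\top)^\top & -I_{n_u} & 0\\ B_w^\top&0&-\alpha\eta I_{n_w}\end{bmatrix}$. *)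

theory Defs
  imports "Jordan_Normal_Form.Matrix" "HOL-Library.Extended_Real"
begin

(* Block-index map: column/row j of the n_u-dimensional input belongs to block (blk_idx nus j),
   where nus = [n_{u_1},...,n_{u_N}]. *)
definition blk_idx :: "nat list \<Rightarrow> nat \<Rightarrow> nat" where
  "blk_idx nus j = concat (map (\<lambda>i. replicate (nus ! i) i) [0..<length nus]) ! j"

(* Pi(pi) = blkdiag(pi_1 I_{n_{u_1}}, ..., pi_N I_{n_{u_N}}) *)
definition Pi_mat :: "nat list \<Rightarrow> real vec \<Rightarrow> real mat" where
  "Pi_mat nus p = mat_diag (sum_list nus) (\<lambda>j. p $ blk_idx nus j)"

definition vstack :: "'a::zero mat \<Rightarrow> 'a mat \<Rightarrow> 'a mat" where
  "vstack A B = four_block_mat A (0\<^sub>m (dim_row A) 0) B (0\<^sub>m (dim_row B) 0)"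

definition hstack :: "'a::zero mat \<Rightarrow> 'a mat \<Rightarrow> 'a mat" where
  "hstack A B = four_block_mat A B (0\<^sub>m 0 (dim_col A)) (0\<^sub>m 0 (dim_col B))"

definition blk3 :: "'a::zero mat \<Rightarrow> 'a mat \<Rightarrow> 'a mat \<Rightarrow> 'a mat \<Rightarrow> 'a mat \<Rightarrow> 'a mat
    \<Rightarrow> 'a mat \<Rightarrow> 'a mat \<Rightarrow> 'a mat \<Rightarrow> 'a mat" where
  "blk3 M11 M12 M13 M21 M22 M23 M31 M32 M33 =
     four_block_mat (four_block_mat M11 M12 M21 M22) (vstack M13 M23) (hstack M31 M32) M33"

definition nsd :: "nat \<Rightarrow> real mat \<Rightarrow> bool" where
  "nsd n M \<longleftrightarrow> M \<in> carrier_mat n n \<and> transpose_mat M = M \<and>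
     (\<forall>v \<in> carrier_vec n. v \<bullet> (M *\<^sub>v v) \<le> 0)"

definition F1 :: "nat list \<Rightarrow> nat \<Rightarrow> real mat \<Rightarrow> real mat \<Rightarrow> real mat \<Rightarrow> real \<Rightarrow> real
    \<Rightarrow> real mat \<Rightarrow> real mat \<Rightarrow> real vec \<Rightarrow> real mat" where
  "F1 nus nw A Bu Bw \<alpha> \<eta> S Z p =
     (let P = Pi_mat nus p in
      four_block_mat (A * S + S * transpose_mat A + \<alpha> \<cdot>\<^sub>m S - Bu * P * Z
                        - transpose_mat Z * P * transpose_mat Bu)
                     Bw (transpose_mat Bw) ((- (\<alpha> * \<eta>)) \<cdot>\<^sub>m 1\<^sub>m nw))"

definition F2 :: "nat \<Rightarrow> nat \<Rightarrow> nat \<Rightarrow> real mat \<Rightarrow> real mat \<Rightarrow> real mat \<Rightarrow> real \<Rightarrow> real mat" where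
  "F2 nx nw nz Cz Dwz S \<zeta> =
     blk3 (- S) (0\<^sub>m nx nw) (S * transpose_mat Cz)
          (0\<^sub>m nw nx) (- (1\<^sub>m nw)) (transpose_mat Dwz)
          (Cz * S) Dwz ((- \<zeta>) \<cdot>\<^sub>m 1\<^sub>m nz)"

definition H_lin :: "real mat \<Rightarrow> real mat \<Rightarrow> real mat \<Rightarrow> real mat \<Rightarrow> real mat \<Rightarrow> real mat" where
  "H_lin Bu P Z P0 Z0 =
     (let X = Bu * P + transpose_mat Z; X0 = Bu * P0 + transpose_mat Z0 in
      X0 * transpose_mat X0 - X * transpose_mat X0 - X0 * transpose_mat X)"

definition C_s :: "nat \<Rightarrow> nat \<Rightarrow> real mat \<Rightarrow> real mat \<Rightarrow> real mat \<Rightarrow> real \<Rightarrow> real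
    \<Rightarrow> real mat \<Rightarrow> real mat \<Rightarrow> real mat \<Rightarrow> real mat \<Rightarrow> real mat \<Rightarrow> real mat" where
  "C_s nu nw A Bu Bw \<alpha> \<eta> S P Z P0 Z0 =
     blk3 (A * S + S * transpose_mat A + \<alpha> \<cdot>\<^sub>m S + (1/2) \<cdot>\<^sub>m H_lin Bu P Z P0 Z0)
          ((1 / sqrt 2) \<cdot>\<^sub>m (Bu * P - transpose_mat Z)) Bw
          (transpose_mat ((1 / sqrt 2) \<cdot>\<^sub>m (Bu * P - transpose_mat Z))) (- (1\<^sub>m nu)) (0\<^sub>m nu nw)
          (transpose_mat Bw) (0\<^sub>m nw nu) ((- (\<alpha> * \<eta>)) \<cdot>\<^sub>m 1\<^sub>m nw)"

definition pi_ok :: "nat \<Rightarrow> nat \<Rightarrow> real mat \<Rightarrow> real vec \<Rightarrow> real vec \<Rightarrow> bool" where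
  "pi_ok N r H h p \<longleftrightarrow> p \<in> carrier_vec N \<and> (\<forall>i<r. (H *\<^sub>v p) $ i \<le> h $ i)
     \<and> (\<forall>i<N. 0 \<le> p $ i \<and> p $ i \<le> 1)"

(* optimal value of problem (R), +\<infinity> if infeasible *)
definition L_R where
  "L_R nus nx nw nz r A Bu Bw Cz Dwz \<alpha> \<eta> \<alpha>\<pi> H h =
     Inf {ereal ((\<eta> + 1) * \<zeta> + \<alpha>\<pi> \<bullet> p) | S Z \<zeta> p.
        S \<in> carrier_mat nx nx \<and> transpose_mat S = S \<and> Z \<in> carrier_mat (sum_list nus) nx \<and>
        pi_ok (length nus) r H h p \<and>
        nsd (nx + nw) (F1 nus nw A Bu Bw \<alpha> \<eta> S Z p) \<and>
        nsd (nx + nw + nz) (F2 nx nw nz Cz Dwz S \<zeta>)}"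

definition L_hat where
  "L_hat nus nx nw nz r A Bu Bw Cz Dwz \<alpha> \<eta> \<alpha>\<pi> H h p0 Z0 =
     Inf {ereal ((\<eta> + 1) * \<zeta> + \<alpha>\<pi> \<bullet> p) | S Z \<zeta> p.
        S \<in> carrier_mat nx nx \<and> transpose_mat S = S \<and> Z \<in> carrier_mat (sum_list nus) nx \<and>
        pi_ok (length nus) r H h p \<and>
        nsd (nx + sum_list nus + nw)
          (C_s (sum_list nus) nw A Bu Bw \<alpha> \<eta> S (Pi_mat nus p) Z (Pi_mat nus p0) Z0) \<and>
        nsd (nx + nw + nz) (F2 nx nw nz Cz Dwz S \<zeta>)}"

end

theory Submission
  imports Defs
begin


lemma qf4:
  fixes A B C D :: "real mat"
  assumes A: "A \<in> carrier_mat n1 n1" and B: "B \<in> carrier_mat n1 n2"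
    and C: "C \<in> carrier_mat n2 n1" and D: "D \<in> carrier_mat n2 n2"
    and a: "a \<in> carrier_vec n1" and d: "d \<in> carrier_vec n2"
  shows "(a @\<^sub>v d) \<bullet> (four_block_mat A B C D *\<^sub>v (a @\<^sub>v d))
     = a \<bullet> (A *\<^sub>v a) + a \<bullet> (B *\<^sub>v d) + d \<bullet> (C *\<^sub>v a) + d \<bullet> (D *\<^sub>v d)"
proof -
  have "(a @\<^sub>v d) \<bullet> (four_block_mat A B C D *\<^sub>v (a @\<^sub>v d))
     = (a @\<^sub>v d) \<bullet> ((A *\<^sub>v a + B *\<^sub>v d) @\<^sub>v (C *\<^sub>v a + D *\<^sub>v d))"
    using four_block_mat_mult_vec[OF A B C D a d] by simp
  also have "\<dots> = a \<bullet> (A *\<^sub>v a + B *\<^sub>v d) + d \<bullet> (C *\<^sub>v a + D *\<^sub>v d)"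
    by (rule scalar_prod_append) (use A B C D a d in auto)
  also have "\<dots> = a \<bullet> (A *\<^sub>v a) + a \<bullet> (B *\<^sub>v d) + d \<bullet> (C *\<^sub>v a) + d \<bullet> (D *\<^sub>v d)"
    using A B C D a d by (simp add: scalar_prod_add_distrib[of _ n1] scalar_prod_add_distrib[of _ n2])
  finally show ?thesis .
qed

lemma append_vec_zero0:
  assumes "y \<in> carrier_vec 0" shows "(x::'a vec) @\<^sub>v y = x"
  by (rule eq_vecI) (use assms in auto)

lemma vstack_mult:
  fixes A B :: "real mat"
  assumes A: "A \<in> carrier_mat n1 m" and B: "B \<in> carrier_mat n2 m" and v: "v \<in> carrier_vec m"
  shows "vstack A B *\<^sub>v v = (A *\<^sub>v v) @\<^sub>v (B *\<^sub>v v)"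
proof -
  have "vstack A B *\<^sub>v v = vstack A B *\<^sub>v (v @\<^sub>v 0\<^sub>v 0)"
    by (simp add: append_vec_zero0)
  also have "\<dots> = (A *\<^sub>v v + 0\<^sub>m n1 0 *\<^sub>v 0\<^sub>v 0) @\<^sub>v (B *\<^sub>v v + 0\<^sub>m n2 0 *\<^sub>v 0\<^sub>v 0)"
  proof -
    have h: "vstack A B = four_block_mat A (0\<^sub>m n1 0) B (0\<^sub>m n2 0)"
      unfolding vstack_def using A B by simp
    show ?thesis unfolding h
      by (rule four_block_mat_mult_vec[OF A _ B _ v]) auto
  qed
  also have "\<dots> = (A *\<^sub>v v) @\<^sub>v (B *\<^sub>v v)" using A B v by auto
  finally show ?thesis .
qed

lemma hstack_mult:
  fixes A B :: "real mat"
  assumes A: "A \<in> carrier_mat m n1" and B: "B \<in> carrier_mat m n2"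
    and a: "a \<in> carrier_vec n1" and d: "d \<in> carrier_vec n2"
  shows "hstack A B *\<^sub>v (a @\<^sub>v d) = A *\<^sub>v a + B *\<^sub>v d"
proof -
  have "hstack A B *\<^sub>v (a @\<^sub>v d) = (A *\<^sub>v a + B *\<^sub>v d) @\<^sub>v (0\<^sub>m 0 n1 *\<^sub>v a + 0\<^sub>m 0 n2 *\<^sub>v d)"
  proof -
    have h: "hstack A B = four_block_mat A B (0\<^sub>m 0 n1) (0\<^sub>m 0 n2)"
      unfolding hstack_def using A B by simp
    show ?thesis unfolding h
      by (rule four_block_mat_mult_vec[OF A B _ _ a d]) auto
  qed
  also have "\<dots> = A *\<^sub>v a + B *\<^sub>v d"
    by (rule append_vec_zero0) (rule carrier_vecI, simp)
  finally show ?thesis .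
qed

lemma Pi_sym: "transpose_mat (Pi_mat nus p) = Pi_mat nus p"
  unfolding Pi_mat_def mat_diag_def by (rule eq_matI) auto

lemma Pi_carrier: "Pi_mat nus p \<in> carrier_mat (sum_list nus) (sum_list nus)"
  unfolding Pi_mat_def by simp

lemma key_ineq:
  fixes p z a0 :: "real vec"
  assumes p: "p \<in> carrier_vec n" and z: "z \<in> carrier_vec n" and a: "a0 \<in> carrier_vec n"
  shows "- 2 * (p \<bullet> z) \<le> (1/2) * (a0 \<bullet> a0 - 2 * ((p + z) \<bullet> a0)) + (1/2) * ((p - z) \<bullet> (p - z))"
proof -
  have s1: "a0 \<bullet> a0 = (\<Sum>i<n. a0$i * a0$i)" using a unfolding scalar_prod_def
    by (simp add: lessThan_atLeast0)
  have s2: "(p + z) \<bullet> a0 = (\<Sum>i<n. (p$i + z$i) * a0$i)" using a p z unfolding scalar_prod_def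
    by (auto simp: lessThan_atLeast0 intro!: sum.cong)
  have s3: "(p - z) \<bullet> (p - z) = (\<Sum>i<n. (p$i - z$i) * (p$i - z$i))" using p z unfolding scalar_prod_def
    by (auto simp: lessThan_atLeast0 intro!: sum.cong)
  have s4: "p \<bullet> z = (\<Sum>i<n. p$i * z$i)" using p z unfolding scalar_prod_def
    by (simp add: lessThan_atLeast0)
  have e: "(\<Sum>i<n. (a0$i - p$i - z$i)^2) = (\<Sum>i<n. a0$i*a0$i - 2*((p$i+z$i)*a0$i) + (p$i-z$i)*(p$i-z$i) + 4*(p$i*z$i))"
    by (rule sum.cong[OF refl]) (simp add: power2_eq_square algebra_simps)
  also have "\<dots> = (\<Sum>i<n. a0$i*a0$i) - 2*(\<Sum>i<n. (p$i+z$i)*a0$i) + (\<Sum>i<n. (p$i-z$i)*(p$i-z$i)) + 4*(\<Sum>i<n. p$i*z$i)"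
    by (simp only: sum.distrib sum_subtractf sum_distrib_left)
  finally have e2: "(\<Sum>i<n. (a0$i - p$i - z$i)^2) = a0 \<bullet> a0 - 2 * ((p + z) \<bullet> a0) + (p - z) \<bullet> (p - z) + 4 * (p \<bullet> z)"
    unfolding s1 s2 s3 s4 .
  have "0 \<le> (\<Sum>i<n. (a0$i - p$i - z$i)^2)" by (rule sum_nonneg) simp
  hence h: "0 \<le> a0 \<bullet> a0 - 2 * ((p + z) \<bullet> a0) + (p - z) \<bullet> (p - z) + 4 * (p \<bullet> z)" unfolding e2 .
  show ?thesis
  proof -
    define A where "A = a0 \<bullet> a0"
    define B where "B = (p + z) \<bullet> a0"
    define C where "C = (p - z) \<bullet> (p - z)"
    define D where "D = p \<bullet> z"
    have "0 \<le> A - 2 * B + C + 4 * D" using h unfolding A_def B_def C_def D_def .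
    hence "- 2 * D \<le> (1/2) * (A - 2 * B) + (1/2) * C" by argo
    thus ?thesis unfolding A_def B_def C_def D_def .
  qed
qed

lemma transpose_smult_mat: "transpose_mat (c \<cdot>\<^sub>m (M::real mat)) = c \<cdot>\<^sub>m transpose_mat M"
  by (rule eq_matI) auto

lemma smult_mat_mult_vec: "v \<in> carrier_vec (dim_col M) \<Longrightarrow> (c \<cdot>\<^sub>m (M::real mat)) *\<^sub>v v = c \<cdot>\<^sub>v (M *\<^sub>v v)"
  by (rule eq_vecI) auto

lemma add_swap12: "X \<in> carrier_mat n n \<Longrightarrow> Y \<in> carrier_mat n n \<Longrightarrow> W \<in> carrier_mat n n \<Longrightarrow>
  Y + X + W = X + Y + (W :: real mat)"
  by (rule eq_matI) auto

lemma minus_swap23: "X \<in> carrier_mat n n \<Longrightarrow> Y \<in> carrier_mat n n \<Longrightarrow> W \<in> carrier_mat n n \<Longrightarrow>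
  X - W - Y = X - Y - (W :: real mat)"
  by (rule eq_matI) auto

lemma Cs_imp_F1:
  fixes nus :: "nat list" and A Bu Bw S Z Z0 :: "real mat" and p p0 :: "real vec"
  defines "nu \<equiv> sum_list nus"
  assumes A: "A \<in> carrier_mat nx nx" and Bu: "Bu \<in> carrier_mat nx nu"
    and Bw: "Bw \<in> carrier_mat nx nw"
    and S: "S \<in> carrier_mat nx nx" and Ssym: "transpose_mat S = S"
    and Z: "Z \<in> carrier_mat nu nx" and Z0: "Z0 \<in> carrier_mat nu nx"
    and C: "nsd (nx + nu + nw) (C_s nu nw A Bu Bw \<alpha> \<eta> S (Pi_mat nus p) Z (Pi_mat nus p0) Z0)"
  shows "nsd (nx + nw) (F1 nus nw A Bu Bw \<alpha> \<eta> S Z p)"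
proof -
  define P where "P = Pi_mat nus p"
  define P0 where "P0 = Pi_mat nus p0"
  have P: "P \<in> carrier_mat nu nu" and P0: "P0 \<in> carrier_mat nu nu"
    unfolding P_def P0_def nu_def by (rule Pi_carrier)+
  have Psym: "transpose_mat P = P" and P0sym: "transpose_mat P0 = P0"
    unfolding P_def P0_def by (rule Pi_sym)+
  define K where "K = A * S + S * transpose_mat A + \<alpha> \<cdot>\<^sub>m S"
  define F11 where "F11 = K - Bu * P * Z - transpose_mat Z * P * transpose_mat Bu"
  define D where "D = (- (\<alpha> * \<eta>)) \<cdot>\<^sub>m (1\<^sub>m nw :: real mat)"
  have K: "K \<in> carrier_mat nx nx" unfolding K_def using A S by auto
  have BPZ: "Bu * P * Z \<in> carrier_mat nx nx" using Bu P Z by auto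
  have ZPB: "transpose_mat Z * P * transpose_mat Bu \<in> carrier_mat nx nx" using Bu P Z by auto
  have F11: "F11 \<in> carrier_mat nx nx" unfolding F11_def using K BPZ ZPB by (auto intro!: minus_carrier_mat)
  have D: "D \<in> carrier_mat nw nw" unfolding D_def by auto
  have F1eq: "F1 nus nw A Bu Bw \<alpha> \<eta> S Z p = four_block_mat F11 Bw (transpose_mat Bw) D"
    unfolding F1_def Let_def F11_def K_def D_def P_def by (rule refl)
  have t1: "transpose_mat (A * S) = S * transpose_mat A"
    using transpose_mult[OF A S] Ssym by simp
  have t2: "transpose_mat (S * transpose_mat A) = A * S"
    using transpose_mult[OF S, of "transpose_mat A" nx] A Ssym by simp
  have t3: "transpose_mat (Bu * P * Z) = transpose_mat Z * P * transpose_mat Bu"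
  proof -
    have "transpose_mat (Bu * P * Z) = transpose_mat Z * transpose_mat (Bu * P)"
      using transpose_mult[of "Bu * P" nx nu Z nx] Bu P Z by simp
    also have "transpose_mat (Bu * P) = P * transpose_mat Bu"
      using transpose_mult[OF Bu P] Psym by simp
    finally show ?thesis using Bu P Z by (simp add: assoc_mult_mat[of _ nx nu _ nu _ nx])
  qed
  have t4: "transpose_mat (transpose_mat Z * P * transpose_mat Bu) = Bu * P * Z"
    using arg_cong[OF t3, of transpose_mat] by simp
  have Ksym: "transpose_mat K = K"
  proof -
    have "transpose_mat K = transpose_mat (A * S) + transpose_mat (S * transpose_mat A) + transpose_mat (\<alpha> \<cdot>\<^sub>m S)"
      unfolding K_def using A S
      by (simp add: transpose_add[of _ nx nx])
    also have "\<dots> = S * transpose_mat A + A * S + \<alpha> \<cdot>\<^sub>m S"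
      unfolding t1 t2 transpose_smult_mat Ssym ..
    also have "\<dots> = K" unfolding K_def
      by (rule add_swap12[of _ nx]) (use A S in auto)
    finally show ?thesis .
  qed
  have F11sym: "transpose_mat F11 = F11"
  proof -
    have "transpose_mat F11 = transpose_mat K - transpose_mat (Bu * P * Z) - transpose_mat (transpose_mat Z * P * transpose_mat Bu)"
      unfolding F11_def using K BPZ ZPB
      by (simp add: transpose_minus[of _ nx nx] minus_carrier_mat)
    also have "\<dots> = K - transpose_mat Z * P * transpose_mat Bu - Bu * P * Z"
      unfolding Ksym t3 t4 ..
    also have "\<dots> = F11" unfolding F11_def
      by (rule minus_swap23[of _ nx]) (use K BPZ ZPB in auto)
    finally show ?thesis .
  qed
  have F1sym: "transpose_mat (F1 nus nw A Bu Bw \<alpha> \<eta> S Z p) = F1 nus nw A Bu Bw \<alpha> \<eta> S Z p"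
    unfolding F1eq using F11sym F11 Bw D
    by (subst transpose_four_block_mat[OF F11 Bw _ D]) (auto simp: D_def)
  define X where "X = Bu * P + transpose_mat Z"
  define X0 where "X0 = Bu * P0 + transpose_mat Z0"
  define Y where "Y = Bu * P - transpose_mat Z"
  define t where "t = 1 / sqrt (2::real)"
  define M11 where "M11 = K + (1/2) \<cdot>\<^sub>m (X0 * transpose_mat X0 - X * transpose_mat X0 - X0 * transpose_mat X)"
  define M12 where "M12 = t \<cdot>\<^sub>m Y"
  have X: "X \<in> carrier_mat nx nu" unfolding X_def using Bu P Z by auto
  have X0: "X0 \<in> carrier_mat nx nu" unfolding X0_def using Bu P0 Z0 by auto
  have Y: "Y \<in> carrier_mat nx nu" unfolding Y_def using Bu P Z by (auto intro!: minus_carrier_mat)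
  have HH: "X0 * transpose_mat X0 - X * transpose_mat X0 - X0 * transpose_mat X \<in> carrier_mat nx nx"
    using X X0 by (auto intro!: minus_carrier_mat)
  have M11: "M11 \<in> carrier_mat nx nx" unfolding M11_def using K HH by auto
  have M12: "M12 \<in> carrier_mat nx nu" unfolding M12_def using Y by auto
  have Cs_eq: "C_s nu nw A Bu Bw \<alpha> \<eta> S (Pi_mat nus p) Z (Pi_mat nus p0) Z0 =
     four_block_mat (four_block_mat M11 M12 (transpose_mat M12) (- (1\<^sub>m nu)))
        (vstack Bw (0\<^sub>m nu nw)) (hstack (transpose_mat Bw) (0\<^sub>m nw nu)) D"
    unfolding C_s_def blk3_def H_lin_def Let_def M11_def M12_def K_def X_def X0_def Y_def t_def D_def
      P_def P0_def by (rule refl)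
  show ?thesis unfolding nsd_def
  proof (intro conjI ballI)
    show "F1 nus nw A Bu Bw \<alpha> \<eta> S Z p \<in> carrier_mat (nx + nw) (nx + nw)"
      unfolding F1eq using F11 Bw D by auto
    show "transpose_mat (F1 nus nw A Bu Bw \<alpha> \<eta> S Z p) = F1 nus nw A Bu Bw \<alpha> \<eta> S Z p" by (rule F1sym)
    fix v :: "real vec" assume v: "v \<in> carrier_vec (nx + nw)"
    define v1 where "v1 = vec_first v nx"
    define v2 where "v2 = vec_last v nw"
    have v1: "v1 \<in> carrier_vec nx" and v2: "v2 \<in> carrier_vec nw" unfolding v1_def v2_def by auto
    have vsplit: "v = v1 @\<^sub>v v2" unfolding v1_def v2_def using v by simp
    define u where "u = transpose_mat M12 *\<^sub>v v1"
    have u: "u \<in> carrier_vec nu" unfolding u_def using M12 v1 by auto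
    have qF: "v \<bullet> (F1 nus nw A Bu Bw \<alpha> \<eta> S Z p *\<^sub>v v) =
       v1 \<bullet> (F11 *\<^sub>v v1) + v1 \<bullet> (Bw *\<^sub>v v2) + v2 \<bullet> (transpose_mat Bw *\<^sub>v v1) + v2 \<bullet> (D *\<^sub>v v2)"
      unfolding F1eq vsplit by (rule qf4[OF F11 Bw _ D v1 v2]) (use Bw in auto)
    have w: "(v1 @\<^sub>v u) @\<^sub>v v2 \<in> carrier_vec (nx + nu + nw)" using v1 u v2 by auto
    have qC0: "((v1 @\<^sub>v u) @\<^sub>v v2) \<bullet> (C_s nu nw A Bu Bw \<alpha> \<eta> S (Pi_mat nus p) Z (Pi_mat nus p0) Z0 *\<^sub>v ((v1 @\<^sub>v u) @\<^sub>v v2)) \<le> 0"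
      using C w unfolding nsd_def by blast
    have inner: "(v1 @\<^sub>v u) \<bullet> (four_block_mat M11 M12 (transpose_mat M12) (- (1\<^sub>m nu)) *\<^sub>v (v1 @\<^sub>v u))
       = v1 \<bullet> (M11 *\<^sub>v v1) + u \<bullet> u"
    proof -
      have "(v1 @\<^sub>v u) \<bullet> (four_block_mat M11 M12 (transpose_mat M12) (- (1\<^sub>m nu)) *\<^sub>v (v1 @\<^sub>v u))
        = v1 \<bullet> (M11 *\<^sub>v v1) + v1 \<bullet> (M12 *\<^sub>v u) + u \<bullet> (transpose_mat M12 *\<^sub>v v1) + u \<bullet> (- (1\<^sub>m nu) *\<^sub>v u)"
        by (rule qf4[OF M11 M12 _ _ v1 u]) (use M12 in auto)
      also have "v1 \<bullet> (M12 *\<^sub>v u) = u \<bullet> u"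
        using transpose_vec_mult_scalar[OF M12 u v1] unfolding u_def by simp
      also have "u \<bullet> (transpose_mat M12 *\<^sub>v v1) = u \<bullet> u" unfolding u_def ..
      also have "u \<bullet> (- (1\<^sub>m nu) *\<^sub>v u) = - (u \<bullet> u)" using u by simp
      finally show ?thesis by simp
    qed
    have Z1: "0\<^sub>m nu nw *\<^sub>v v2 = 0\<^sub>v nu" using v2 by auto
    have Z2: "0\<^sub>m nw nu *\<^sub>v u = 0\<^sub>v nw" using u by auto
    have vs: "(v1 @\<^sub>v u) \<bullet> (vstack Bw (0\<^sub>m nu nw) *\<^sub>v v2) = v1 \<bullet> (Bw *\<^sub>v v2)"
    proof -
      have e: "vstack Bw (0\<^sub>m nu nw) *\<^sub>v v2 = (Bw *\<^sub>v v2) @\<^sub>v (0\<^sub>m nu nw *\<^sub>v v2)"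
        by (rule vstack_mult[OF Bw _ v2, of _ nu]) simp
      show ?thesis unfolding e Z1
        using scalar_prod_append[of v1 nx u nu "Bw *\<^sub>v v2" "0\<^sub>v nu"] v1 u Bw v2 by simp
    qed
    have hs: "v2 \<bullet> (hstack (transpose_mat Bw) (0\<^sub>m nw nu) *\<^sub>v (v1 @\<^sub>v u)) = v2 \<bullet> (transpose_mat Bw *\<^sub>v v1)"
    proof -
      have e: "hstack (transpose_mat Bw) (0\<^sub>m nw nu) *\<^sub>v (v1 @\<^sub>v u) = transpose_mat Bw *\<^sub>v v1 + 0\<^sub>m nw nu *\<^sub>v u"
        by (rule hstack_mult[of _ nw nx _ nu]) (use Bw v1 u in auto)
      have "transpose_mat Bw *\<^sub>v v1 + 0\<^sub>v nw = transpose_mat Bw *\<^sub>v v1"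
        by (rule right_zero_vec) (use Bw v1 in auto)
      then show ?thesis unfolding e Z2 by simp
    qed
    have IN: "four_block_mat M11 M12 (transpose_mat M12) (- (1\<^sub>m nu)) \<in> carrier_mat (nx + nu) (nx + nu)"
      using four_block_carrier_mat[OF M11, of "- (1\<^sub>m nu)" nu nu] by simp
    have VS: "vstack Bw (0\<^sub>m nu nw) \<in> carrier_mat (nx + nu) nw"
      using four_block_carrier_mat[OF Bw, of "0\<^sub>m nu 0" nu 0] unfolding vstack_def by simp
    have HS: "hstack (transpose_mat Bw) (0\<^sub>m nw nu) \<in> carrier_mat nw (nx + nu)"
      using four_block_carrier_mat[of "transpose_mat Bw" nw nx "0\<^sub>m 0 nu" 0 nu] Bw unfolding hstack_def by simp
    have vu: "v1 @\<^sub>v u \<in> carrier_vec (nx + nu)" using v1 u by simp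
    have qC: "v1 \<bullet> (M11 *\<^sub>v v1) + u \<bullet> u + v1 \<bullet> (Bw *\<^sub>v v2) + v2 \<bullet> (transpose_mat Bw *\<^sub>v v1) + v2 \<bullet> (D *\<^sub>v v2) \<le> 0"
    proof -
      have "((v1 @\<^sub>v u) @\<^sub>v v2) \<bullet> (C_s nu nw A Bu Bw \<alpha> \<eta> S (Pi_mat nus p) Z (Pi_mat nus p0) Z0 *\<^sub>v ((v1 @\<^sub>v u) @\<^sub>v v2))
        = (v1 @\<^sub>v u) \<bullet> (four_block_mat M11 M12 (transpose_mat M12) (- (1\<^sub>m nu)) *\<^sub>v (v1 @\<^sub>v u))
          + (v1 @\<^sub>v u) \<bullet> (vstack Bw (0\<^sub>m nu nw) *\<^sub>v v2)
          + v2 \<bullet> (hstack (transpose_mat Bw) (0\<^sub>m nw nu) *\<^sub>v (v1 @\<^sub>v u)) + v2 \<bullet> (D *\<^sub>v v2)"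
        unfolding Cs_eq by (rule qf4[OF IN VS HS D vu v2])
      thus ?thesis using qC0 unfolding inner vs hs by simp
    qed
    have core: "v1 \<bullet> (F11 *\<^sub>v v1) \<le> v1 \<bullet> (M11 *\<^sub>v v1) + u \<bullet> u"
    proof -
      define b where "b = transpose_mat Bu *\<^sub>v v1"
      define pp where "pp = P *\<^sub>v b"
      define z where "z = Z *\<^sub>v v1"
      define a0 where "a0 = P0 *\<^sub>v b + Z0 *\<^sub>v v1"
      have b: "b \<in> carrier_vec nu" unfolding b_def using Bu v1 by auto
      have pp: "pp \<in> carrier_vec nu" unfolding pp_def using P b by auto
      have z: "z \<in> carrier_vec nu" unfolding z_def using Z v1 by auto
      have a0: "a0 \<in> carrier_vec nu" unfolding a0_def using P0 b Z0 v1 by auto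
      have Pz: "P *\<^sub>v z \<in> carrier_vec nu" using P z by auto
      have BPZv: "(Bu * P * Z) *\<^sub>v v1 = Bu *\<^sub>v (P *\<^sub>v z)"
        unfolding z_def using Bu P Z v1 by (simp add: assoc_mult_mat_vec[of _ nx nu _ nx])
      have ZPBv: "(transpose_mat Z * P * transpose_mat Bu) *\<^sub>v v1 = transpose_mat Z *\<^sub>v pp"
        unfolding pp_def b_def using Bu P Z v1 by (simp add: assoc_mult_mat_vec[of _ nx nu _ nx])
      have i1: "v1 \<bullet> ((Bu * P * Z) *\<^sub>v v1) = pp \<bullet> z"
      proof -
        have "v1 \<bullet> (Bu *\<^sub>v (P *\<^sub>v z)) = b \<bullet> (P *\<^sub>v z)"
          using transpose_vec_mult_scalar[OF Bu Pz v1] unfolding b_def by simp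
        also have "\<dots> = pp \<bullet> z"
          using transpose_vec_mult_scalar[OF P z b] Psym unfolding pp_def by simp
        finally show ?thesis unfolding BPZv .
      qed
      have i2: "v1 \<bullet> ((transpose_mat Z * P * transpose_mat Bu) *\<^sub>v v1) = pp \<bullet> z"
      proof -
        have ZT: "transpose_mat Z \<in> carrier_mat nx nu" using Z by simp
        have "v1 \<bullet> (transpose_mat Z *\<^sub>v pp) = z \<bullet> pp"
          using transpose_vec_mult_scalar[OF ZT pp v1] unfolding z_def by simp
        also have "\<dots> = pp \<bullet> z" by (rule comm_scalar_prod[OF z pp])
        finally show ?thesis unfolding ZPBv .
      qed
      have f1: "v1 \<bullet> (F11 *\<^sub>v v1) = v1 \<bullet> (K *\<^sub>v v1) - 2 * (pp \<bullet> z)"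
      proof -
        have "F11 *\<^sub>v v1 = K *\<^sub>v v1 - (Bu * P * Z) *\<^sub>v v1 - (transpose_mat Z * P * transpose_mat Bu) *\<^sub>v v1"
          unfolding F11_def using K BPZ ZPB v1
          by (simp add: minus_mult_distrib_mat_vec[of _ nx nx] minus_carrier_mat)
        hence "v1 \<bullet> (F11 *\<^sub>v v1) = v1 \<bullet> (K *\<^sub>v v1) - v1 \<bullet> ((Bu * P * Z) *\<^sub>v v1)
            - v1 \<bullet> ((transpose_mat Z * P * transpose_mat Bu) *\<^sub>v v1)"
          using K BPZ ZPB v1 by (simp add: scalar_prod_minus_distrib[of _ nx])
        thus ?thesis unfolding i1 i2 by simp
      qed
      have XT: "transpose_mat X = P * transpose_mat Bu + Z"
        unfolding X_def using Bu P Z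
        by (simp add: transpose_add[of _ nx nu] transpose_mult[OF Bu P] Psym)
      have X0T: "transpose_mat X0 = P0 * transpose_mat Bu + Z0"
        unfolding X0_def using Bu P0 Z0
        by (simp add: transpose_add[of _ nx nu] transpose_mult[OF Bu P0] P0sym)
      have Xv: "transpose_mat X *\<^sub>v v1 = pp + z"
        unfolding XT pp_def b_def z_def using Bu P Z v1
        by (simp add: add_mult_distrib_mat_vec[of _ nu nx])
      have X0v: "transpose_mat X0 *\<^sub>v v1 = a0"
        unfolding X0T a0_def b_def using Bu P0 Z0 v1
        by (simp add: add_mult_distrib_mat_vec[of _ nu nx])
      have ppz: "pp + z \<in> carrier_vec nu" using pp z by simp
      have j1: "v1 \<bullet> ((X0 * transpose_mat X0) *\<^sub>v v1) = a0 \<bullet> a0"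
        using transpose_vec_mult_scalar[OF X0 a0 v1] X0 v1 X0v by simp
      have j2: "v1 \<bullet> ((X * transpose_mat X0) *\<^sub>v v1) = (pp + z) \<bullet> a0"
        using transpose_vec_mult_scalar[OF X a0 v1] X X0 v1 X0v Xv by simp
      have j3: "v1 \<bullet> ((X0 * transpose_mat X) *\<^sub>v v1) = (pp + z) \<bullet> a0"
        using transpose_vec_mult_scalar[OF X0 ppz v1] X X0 v1 X0v Xv comm_scalar_prod[OF a0 ppz] by simp
      have f2: "v1 \<bullet> (M11 *\<^sub>v v1) = v1 \<bullet> (K *\<^sub>v v1) + 1/2 * (a0 \<bullet> a0 - 2 * ((pp + z) \<bullet> a0))"
      proof -
        have HHv: "(X0 * transpose_mat X0 - X * transpose_mat X0 - X0 * transpose_mat X) *\<^sub>v v1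
           = (X0 * transpose_mat X0) *\<^sub>v v1 - (X * transpose_mat X0) *\<^sub>v v1 - (X0 * transpose_mat X) *\<^sub>v v1"
          using X X0 v1 by (simp add: minus_mult_distrib_mat_vec[of _ nx nx] minus_carrier_mat)
        have "v1 \<bullet> ((X0 * transpose_mat X0 - X * transpose_mat X0 - X0 * transpose_mat X) *\<^sub>v v1)
           = a0 \<bullet> a0 - 2 * ((pp + z) \<bullet> a0)"
          unfolding HHv using X X0 v1 j1 j2 j3 by (simp add: scalar_prod_minus_distrib[of _ nx])
        moreover have "M11 *\<^sub>v v1 = K *\<^sub>v v1 + (1/2) \<cdot>\<^sub>v ((X0 * transpose_mat X0 - X * transpose_mat X0 - X0 * transpose_mat X) *\<^sub>v v1)"
        proof -
          have sm: "((1/2) \<cdot>\<^sub>m (X0 * transpose_mat X0 - X * transpose_mat X0 - X0 * transpose_mat X)) *\<^sub>v v1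
             = (1/2) \<cdot>\<^sub>v ((X0 * transpose_mat X0 - X * transpose_mat X0 - X0 * transpose_mat X) *\<^sub>v v1)"
            by (rule smult_mat_mult_vec) (use HH v1 in auto)
          show ?thesis unfolding M11_def using K HH v1
            by (simp add: add_mult_distrib_mat_vec[of _ nx nx] sm)
        qed
        ultimately show ?thesis using K HH v1 by (simp add: scalar_prod_add_distrib[of _ nx])
      qed
      have Yv: "transpose_mat Y *\<^sub>v v1 = pp - z"
      proof -
        have "transpose_mat Y = P * transpose_mat Bu - Z"
          unfolding Y_def using Bu P Z
          by (simp add: transpose_minus[of _ nx nu] transpose_mult[OF Bu P] Psym)
        thus ?thesis unfolding pp_def b_def z_def using Bu P Z v1
          by (simp add: minus_mult_distrib_mat_vec[of _ nu nx])
      qed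
      have uu: "u = t \<cdot>\<^sub>v (pp - z)"
        unfolding u_def M12_def transpose_smult_mat using Y v1 Yv by (simp add: smult_mat_mult_vec)
      have tt: "t * t = 1/2" unfolding t_def by (simp add: power_divide power2_eq_square[symmetric])
      have f3: "u \<bullet> u = 1/2 * ((pp - z) \<bullet> (pp - z))"
        unfolding uu using pp z tt by simp
      show ?thesis unfolding f1 f2 f3 using key_ineq[OF pp z a0] by argo
    qed
    show "v \<bullet> (F1 nus nw A Bu Bw \<alpha> \<eta> S Z p *\<^sub>v v) \<le> 0"
      using qF qC core by argo
  qed
qed


theorem corollary2:
  fixes nus :: "nat list" and nx nw nz r :: nat
    and A Bu Bw Cz Dwz H Z0 :: "real mat" and \<alpha> \<eta> :: real and \<alpha>\<pi> h p0 :: "real vec"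
  assumes "length nus \<ge> 1" and "\<forall>k \<in> set nus. k \<ge> 1"
    and "nx \<ge> 1" and "nw \<ge> 1" and "nz \<ge> 1"
    and "A \<in> carrier_mat nx nx" and "Bu \<in> carrier_mat nx (sum_list nus)"
    and "Bw \<in> carrier_mat nx nw" and "Cz \<in> carrier_mat nz nx" and "Dwz \<in> carrier_mat nz nw"
    and "\<alpha> > 0" and "\<eta> > 0"
    and "\<alpha>\<pi> \<in> carrier_vec (length nus)" and "H \<in> carrier_mat r (length nus)" and "h \<in> carrier_vec r"
    and "p0 \<in> carrier_vec (length nus)" and "Z0 \<in> carrier_mat (sum_list nus) nx"
  shows "L_R nus nx nw nz r A Bu Bw Cz Dwz \<alpha> \<eta> \<alpha>\<pi> H h
           \<le> L_hat nus nx nw nz r A Bu Bw Cz Dwz \<alpha> \<eta> \<alpha>\<pi> H h p0 Z0"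
  unfolding L_R_def L_hat_def
proof (rule Inf_superset_mono, rule subsetI)
  fix x assume "x \<in> {ereal ((\<eta> + 1) * \<zeta> + \<alpha>\<pi> \<bullet> p) | S Z \<zeta> p.
        S \<in> carrier_mat nx nx \<and> transpose_mat S = S \<and> Z \<in> carrier_mat (sum_list nus) nx \<and>
        pi_ok (length nus) r H h p \<and>
        nsd (nx + sum_list nus + nw)
          (C_s (sum_list nus) nw A Bu Bw \<alpha> \<eta> S (Pi_mat nus p) Z (Pi_mat nus p0) Z0) \<and>
        nsd (nx + nw + nz) (F2 nx nw nz Cz Dwz S \<zeta>)}"
  then obtain S Z \<zeta> p where x: "x = ereal ((\<eta> + 1) * \<zeta> + \<alpha>\<pi> \<bullet> p)"
    and S: "S \<in> carrier_mat nx nx" and Ss: "transpose_mat S = S"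
    and Z: "Z \<in> carrier_mat (sum_list nus) nx" and pk: "pi_ok (length nus) r H h p"
    and C: "nsd (nx + sum_list nus + nw)
          (C_s (sum_list nus) nw A Bu Bw \<alpha> \<eta> S (Pi_mat nus p) Z (Pi_mat nus p0) Z0)"
    and F2: "nsd (nx + nw + nz) (F2 nx nw nz Cz Dwz S \<zeta>)"
    by blast
  have F1: "nsd (nx + nw) (F1 nus nw A Bu Bw \<alpha> \<eta> S Z p)"
    by (rule Cs_imp_F1[OF assms(6) assms(7) assms(8) S Ss Z assms(17) C])
  show "x \<in> {ereal ((\<eta> + 1) * \<zeta> + \<alpha>\<pi> \<bullet> p) | S Z \<zeta> p.
        S \<in> carrier_mat nx nx \<and> transpose_mat S = S \<and> Z \<in> carrier_mat (sum_list nus) nx \<and>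
        pi_ok (length nus) r H h p \<and>
        nsd (nx + nw) (F1 nus nw A Bu Bw \<alpha> \<eta> S Z p) \<and>
        nsd (nx + nw + nz) (F2 nx nw nz Cz Dwz S \<zeta>)}"
    using x S Ss Z pk F1 F2 by blast
qed

end
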